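(* Let $n\ge 1$ and let ${\rm id}\in S_n$ be the identity permutation. For a pair $(P,Q)$ of standard Young tableaux of a common shape $\lambda\vdash n$, \[ \mathcal{P}({\rm id}\rightarrow P,Q)=\begin{cases}t^{n(\lambda)}\prod_{i=1}^{|\lambda|}\alpha_{P^{(i)}/P^{(i-1)}}(q,t)&\text{if }P=Q,\\ 0&\text{otherwise,}\end{cases} \] where $P^{(i)}$ is the shape of the subtableau of $P$ consisting of entries $\le i$.
   Context: All quantities are rational functions of indeterminates $q,t$. Partitions are Young diagrams in French convention (cells $(x,y)\in\mathbb{Z}_{>0}^2$ with $x\le\lambda_y$), $\lambda'$ the conjugate; for $c=(x,y)\in\lambda$, $a_\lambda(c)=\lambda_y-x$, $\ell_\lambda(c)=\lambda'_x-y$; $n(\kappa)=\sum_{c\in\kappa}\ell_\kappa(c)$, $n'(\kappa)=\sum_{c\in\kappa}a_\kappa(c)$, $n(\rho/\kappa)=n(\rho)-n(\kappa)$, $n'(\rho/\kappa)=n'(\rho)-n'(\kappa)$. $\mathcal{U}(\lambda)$, $\mathcal{D}(\lambda)$: partitions obtained by adding, resp. removing, one cell; $\mathcal{D}^*(\lambda)=\mathcal{D}(\lambda)\cup\{\lambda\}$. For $\kappa\subseteq\rho$, $\mathcal{R}_{\rho/\kappa}$ (resp. $\mathcal{C}_{\rho/\kappa}$): cells of $\kappa$ in a row (resp. column) containing a cell of $\rho/\kappa$. $[i,j]=1-q^it^j$. For $\kappa\lessdot\rho$: $\alpha_{\rho/\kappa}=\prod_{c\in\mathcal{R}_{\rho/\kappa}}\frac{[a_\kappa(c),\ell_\kappa(c)+1]}{[a_\rho(c),\ell_\rho(c)+1]}\prod_{c\in\mathcal{C}_{\rho/\kappa}}\frac{[a_\kappa(c)+1,\ell_\kappa(c)]}{[a_\rho(c)+1,\ell_\rho(c)]}$,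 $\beta_{\rho/\kappa}=1/\alpha_{\rho/\kappa}$. Local probabilities: $\mathcal{P}_\lambda(\lambda\rightarrow\nu)=t^{n(\nu/\lambda)}\alpha_{\nu/\lambda}$; for $\mu\in\mathcal{D}(\lambda)$, $\nu\in\mathcal{U}(\lambda)$, with $A=n'(\lambda/\mu)-n'(\nu/\lambda)$, $B=n(\nu/\lambda)-n(\lambda/\mu)$: $\mathcal{P}_\lambda(\mu\rightarrow\nu)=t^{B-1}\alpha_{\nu/\lambda}\beta_{\lambda/\mu}\frac{(1-q)(1-t)}{(1-q^At^B)(1-q^{A+1}t^{B-1})}$. Growths: for $\sigma\in S_n$, take the $n\times n$ grid with vertices $(i,j)$, $0\le i,j\le n$ (matrix coordinates); square $(i,j)$ has vertices NW $(i-1,j-1)$, NE $(i-1,j)$, SW $(i,j-1)$, SE $(i,j)$ and contains a 1 iff $i=\sigma(j)$. A growth associated with $\sigma$ is a labeling $\Lambda_{ij}$ by partitions with $\Lambda_{ij}\subseteq\Lambda_{i,j+1}$, $\Lambda_{ij}\subseteq\Lambda_{i+1,j}$, $|\Lambda_{ij}|$ = number of squares $(i',j')$ with $i'\le i,j'\le j$ containing a 1. $P(\Lambda)$ (resp. $Q(\Lambda)$) has entry $i$ in the cell $\Lambda_{i,n}/\Lambda_{i-1,n}$ (resp. $\Lambda_{n,i}/\Lambda_{n,i-1}$). A square is of type III if its NE and SW vertices are both $\lambda$, NW vertex $\mu\in\mathcal{D}^*(\lambda)$, SE vertex $\nu\in\mathcal{U}(\lambda)$, and then $\mathcal{P}(\square)=\mathcal{P}_\lambda(\mu\rightarrow\nu)$;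 otherwise $\mathcal{P}(\square)=1$. $\mathcal{P}(\Lambda)=\prod_\square\mathcal{P}(\square)$ and $\mathcal{P}(\sigma\rightarrow P,Q)=\sum\mathcal{P}(\Lambda)$ over growths $\Lambda$ associated with $\sigma$ with $P(\Lambda)=P$, $Q(\Lambda)=Q$. *)

theory Defs
  imports Main "HOL-Combinatorics.Permutations"
begin

text \<open>Young diagrams (French convention) as finite sets of cells (x,y), x = column, y = row,
  both positive.\<close>
type_synonym cell = "nat \<times> nat"
type_synonym diagram = "cell set"

definition is_partition :: "diagram \<Rightarrow> bool" where
  "is_partition la \<longleftrightarrow> finite la \<and>
     (\<forall>x y. (x, y) \<in> la \<longrightarrow> 1 \<le> x \<and> 1 \<le> y) \<and>
     (\<forall>x y x' y'. (x, y) \<in> la \<and> 1 \<le> x' \<and> x' \<le> x \<and> 1 \<le> y' \<and> y' \<le> y \<longrightarrow> (x', y') \<in> la)"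

definition rowlen :: "diagram \<Rightarrow> nat \<Rightarrow> nat" where
  "rowlen la y = card {x. (x, y) \<in> la}"

definition collen :: "diagram \<Rightarrow> nat \<Rightarrow> nat" where
  "collen la x = card {y. (x, y) \<in> la}"

definition arm :: "diagram \<Rightarrow> cell \<Rightarrow> nat" where
  "arm la c = rowlen la (snd c) - fst c"

definition leg :: "diagram \<Rightarrow> cell \<Rightarrow> nat" where
  "leg la c = collen la (fst c) - snd c"

definition nfun :: "diagram \<Rightarrow> nat" where
  "nfun \<kappa> = (\<Sum>c\<in>\<kappa>. leg \<kappa> c)"

definition nprime :: "diagram \<Rightarrow> nat" where
  "nprime \<kappa> = (\<Sum>c\<in>\<kappa>. arm \<kappa> c)"

definition nskew :: "diagram \<Rightarrow> diagram \<Rightarrow> int" where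
  "nskew \<rho> \<kappa> = int (nfun \<rho>) - int (nfun \<kappa>)"

definition nprime_skew :: "diagram \<Rightarrow> diagram \<Rightarrow> int" where
  "nprime_skew \<rho> \<kappa> = int (nprime \<rho>) - int (nprime \<kappa>)"

definition Up :: "diagram \<Rightarrow> diagram set" where
  "Up la = {\<nu>. is_partition \<nu> \<and> la \<subseteq> \<nu> \<and> card (\<nu> - la) = 1}"

definition Down :: "diagram \<Rightarrow> diagram set" where
  "Down la = {\<mu>. is_partition \<mu> \<and> \<mu> \<subseteq> la \<and> card (la - \<mu>) = 1}"

definition Down_star :: "diagram \<Rightarrow> diagram set" where
  "Down_star la = Down la \<union> {la}"

definition Rset :: "diagram \<Rightarrow> diagram \<Rightarrow> cell set" where
  "Rset \<rho> \<kappa> = {c \<in> \<kappa>. \<exists>d \<in> \<rho> - \<kappa>. snd d = snd c}"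

definition Cset :: "diagram \<Rightarrow> diagram \<Rightarrow> cell set" where
  "Cset \<rho> \<kappa> = {c \<in> \<kappa>. \<exists>d \<in> \<rho> - \<kappa>. fst d = fst c}"

definition brk :: "'a::field \<Rightarrow> 'a \<Rightarrow> nat \<Rightarrow> nat \<Rightarrow> 'a" where
  "brk q t i j = 1 - q ^ i * t ^ j"

definition alpha :: "'a::field \<Rightarrow> 'a \<Rightarrow> diagram \<Rightarrow> diagram \<Rightarrow> 'a" where
  "alpha q t \<rho> \<kappa> =
     (\<Prod>c\<in>Rset \<rho> \<kappa>. brk q t (arm \<kappa> c) (leg \<kappa> c + 1) / brk q t (arm \<rho> c) (leg \<rho> c + 1)) *
     (\<Prod>c\<in>Cset \<rho> \<kappa>. brk q t (arm \<kappa> c + 1) (leg \<kappa> c) / brk q t (arm \<rho> c + 1) (leg \<rho> c))"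

definition beta :: "'a::field \<Rightarrow> 'a \<Rightarrow> diagram \<Rightarrow> diagram \<Rightarrow> 'a" where
  "beta q t \<rho> \<kappa> = 1 / alpha q t \<rho> \<kappa>"

text \<open>Local probability \<open>\<P>_la(\<mu> \<rightarrow> \<nu>)\<close>, for \<open>\<mu> \<in> \<D>*(la)\<close>, \<open>\<nu> \<in> \<U>(la)\<close>.\<close>
definition local_prob :: "'a::field \<Rightarrow> 'a \<Rightarrow> diagram \<Rightarrow> diagram \<Rightarrow> diagram \<Rightarrow> 'a" where
  "local_prob q t la \<mu> \<nu> =
    (if \<mu> = la then t powi (nskew \<nu> la) * alpha q t \<nu> la
     else (let A = nprime_skew la \<mu> - nprime_skew \<nu> la;
               B = nskew \<nu> la - nskew la \<mu>
           in t powi (B - 1) * alpha q t \<nu> la * beta q t la \<mu> *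
              ((1 - q) * (1 - t) /
               ((1 - q powi A * t powi B) * (1 - q powi (A + 1) * t powi (B - 1))))))"

definition is_growth :: "nat \<Rightarrow> (nat \<Rightarrow> nat) \<Rightarrow> (nat \<Rightarrow> nat \<Rightarrow> diagram) \<Rightarrow> bool" where
  "is_growth n \<sigma> \<Lambda> \<longleftrightarrow>
     (\<forall>i j. (i > n \<or> j > n) \<longrightarrow> \<Lambda> i j = {}) \<and>
     (\<forall>i\<le>n. \<forall>j\<le>n. is_partition (\<Lambda> i j)) \<and>
     (\<forall>i\<le>n. \<forall>j<n. \<Lambda> i j \<subseteq> \<Lambda> i (j + 1)) \<and>
     (\<forall>i<n. \<forall>j\<le>n. \<Lambda> i j \<subseteq> \<Lambda> (i + 1) j) \<and>
     (\<forall>i\<le>n. \<forall>j\<le>n. card (\<Lambda> i j) =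
        card {(i', j'). 1 \<le> i' \<and> i' \<le> i \<and> 1 \<le> j' \<and> j' \<le> j \<and> i' = \<sigma> j'})"

text \<open>Weight of square (i,j), 1 \<le> i,j \<le> n: NW = \<Lambda>(i-1)(j-1), NE = \<Lambda>(i-1)j,
  SW = \<Lambda> i (j-1), SE = \<Lambda> i j.\<close>
definition square_prob :: "'a::field \<Rightarrow> 'a \<Rightarrow> (nat \<Rightarrow> nat \<Rightarrow> diagram) \<Rightarrow> nat \<Rightarrow> nat \<Rightarrow> 'a" where
  "square_prob q t \<Lambda> i j =
    (let \<mu> = \<Lambda> (i - 1) (j - 1); ne = \<Lambda> (i - 1) j; sw = \<Lambda> i (j - 1); \<nu> = \<Lambda> i j in
     if ne = sw \<and> \<mu> \<in> Down_star ne \<and> \<nu> \<in> Up ne then local_prob q t ne \<mu> \<nu> else 1)"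

definition growth_prob :: "'a::field \<Rightarrow> 'a \<Rightarrow> nat \<Rightarrow> (nat \<Rightarrow> nat \<Rightarrow> diagram) \<Rightarrow> 'a" where
  "growth_prob q t n \<Lambda> = (\<Prod>i\<in>{1..n}. \<Prod>j\<in>{1..n}. square_prob q t \<Lambda> i j)"

text \<open>Tableaux are fillings \<open>(nat \<times> nat) \<Rightarrow> nat\<close>, with value 0 outside the shape.\<close>
definition tabP :: "nat \<Rightarrow> (nat \<Rightarrow> nat \<Rightarrow> diagram) \<Rightarrow> cell \<Rightarrow> nat" where
  "tabP n \<Lambda> c = (if \<exists>i. 1 \<le> i \<and> i \<le> n \<and> c \<in> \<Lambda> i n - \<Lambda> (i - 1) n
                  then (LEAST i. 1 \<le> i \<and> i \<le> n \<and> c \<in> \<Lambda> i n - \<Lambda> (i - 1) n) else 0)"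

definition tabQ :: "nat \<Rightarrow> (nat \<Rightarrow> nat \<Rightarrow> diagram) \<Rightarrow> cell \<Rightarrow> nat" where
  "tabQ n \<Lambda> c = (if \<exists>i. 1 \<le> i \<and> i \<le> n \<and> c \<in> \<Lambda> n i - \<Lambda> n (i - 1)
                  then (LEAST i. 1 \<le> i \<and> i \<le> n \<and> c \<in> \<Lambda> n i - \<Lambda> n (i - 1)) else 0)"

definition perm_prob :: "'a::field \<Rightarrow> 'a \<Rightarrow> nat \<Rightarrow> (nat \<Rightarrow> nat) \<Rightarrow> (cell \<Rightarrow> nat) \<Rightarrow> (cell \<Rightarrow> nat) \<Rightarrow> 'a" where
  "perm_prob q t n \<sigma> P Q =
     (\<Sum>\<Lambda>\<in>{\<Lambda>. is_growth n \<sigma> \<Lambda> \<and> tabP n \<Lambda> = P \<and> tabQ n \<Lambda> = Q}. growth_prob q t n \<Lambda>)"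

definition is_SYT :: "diagram \<Rightarrow> (cell \<Rightarrow> nat) \<Rightarrow> bool" where
  "is_SYT la T \<longleftrightarrow> is_partition la \<and>
     (\<forall>c. c \<notin> la \<longrightarrow> T c = 0) \<and>
     bij_betw T la {1..card la} \<and>
     (\<forall>x y. (x, y) \<in> la \<and> (x + 1, y) \<in> la \<longrightarrow> T (x, y) < T (x + 1, y)) \<and>
     (\<forall>x y. (x, y) \<in> la \<and> (x, y + 1) \<in> la \<longrightarrow> T (x, y) < T (x, y + 1))"

definition subshape :: "(cell \<Rightarrow> nat) \<Rightarrow> nat \<Rightarrow> diagram" where
  "subshape T i = {c. T c \<noteq> 0 \<and> T c \<le> i}"

text \<open>Genericity of (q,t): they behave like independent indeterminates.\<close>
definition generic_qt :: "'a::field \<Rightarrow> 'a \<Rightarrow> bool" where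
  "generic_qt q t \<longleftrightarrow> q \<noteq> 0 \<and> t \<noteq> 0 \<and>
     (\<forall>i j :: int. q powi i * t powi j = 1 \<longrightarrow> i = 0 \<and> j = 0)"

end

theory Submission
  imports Defs
begin

section \<open>SYT facts\<close>

lemma part_fin: "is_partition la \<Longrightarrow> finite la"
  unfolding is_partition_def by (elim conjE) assumption

lemma part_pos0: "is_partition la \<Longrightarrow> \<forall>x y. (x, y) \<in> la \<longrightarrow> 1 \<le> x \<and> 1 \<le> y"
  unfolding is_partition_def by (elim conjE) assumption

lemma part_down0: "is_partition la \<Longrightarrow>
  \<forall>x y x' y'. (x, y) \<in> la \<and> 1 \<le> x' \<and> x' \<le> x \<and> 1 \<le> y' \<and> y' \<le> y \<longrightarrow> (x', y') \<in> la"
  unfolding is_partition_def by (elim conjE) assumption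

lemma part_pos: assumes "is_partition la" "(x, y) \<in> la" shows "1 \<le> x \<and> 1 \<le> y"
  using part_pos0[OF assms(1)] assms(2) by simp

lemma part_down: "is_partition la \<Longrightarrow> (x, y) \<in> la \<Longrightarrow> 1 \<le> x' \<Longrightarrow> x' \<le> x \<Longrightarrow> 1 \<le> y' \<Longrightarrow> y' \<le> y
   \<Longrightarrow> (x', y') \<in> la"
proof -
  assume a: "is_partition la" "(x, y) \<in> la" "1 \<le> x'" "x' \<le> x" "1 \<le> y'" "y' \<le> y"
  have "\<forall>x y x' y'. (x, y) \<in> la \<and> 1 \<le> x' \<and> x' \<le> x \<and> 1 \<le> y' \<and> y' \<le> y \<longrightarrow> (x', y') \<in> la"
    by (rule part_down0[OF a(1)])
  then have "(x, y) \<in> la \<and> 1 \<le> x' \<and> x' \<le> x \<and> 1 \<le> y' \<and> y' \<le> y \<longrightarrow> (x', y') \<in> la" by blast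
  then show ?thesis using a by blast
qed

lemma syt_part: "is_SYT la P \<Longrightarrow> is_partition la"
  unfolding is_SYT_def by (elim conjE) assumption

lemma syt_zero0: "is_SYT la P \<Longrightarrow> \<forall>c. c \<notin> la \<longrightarrow> P c = 0"
  unfolding is_SYT_def by (elim conjE) assumption

lemma syt_bij: "is_SYT la P \<Longrightarrow> bij_betw P la {1..card la}"
  unfolding is_SYT_def by (elim conjE) assumption

lemma syt_rowlt0: "is_SYT la P \<Longrightarrow> \<forall>x y. (x, y) \<in> la \<and> (x + 1, y) \<in> la \<longrightarrow> P (x, y) < P (x + 1, y)"
  unfolding is_SYT_def by (elim conjE) assumption

lemma syt_collt0: "is_SYT la P \<Longrightarrow> \<forall>x y. (x, y) \<in> la \<and> (x, y + 1) \<in> la \<longrightarrow> P (x, y) < P (x, y + 1)"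
  unfolding is_SYT_def by (elim conjE) assumption

lemma syt_zero: assumes "is_SYT la P" "c \<notin> la" shows "P c = 0"
  using spec[OF syt_zero0[OF assms(1)], of c] assms(2) by (rule mp)

lemma syt_rowlt: assumes "is_SYT la P" "(x, y) \<in> la" "(x + 1, y) \<in> la" shows "P (x, y) < P (x + 1, y)"
  using syt_rowlt0[OF assms(1)] assms(2,3) by simp

lemma syt_collt: assumes "is_SYT la P" "(x, y) \<in> la" "(x, y + 1) \<in> la" shows "P (x, y) < P (x, y + 1)"
  using syt_collt0[OF assms(1)] assms(2,3) by simp

lemma syt_nz_in:
  assumes "is_SYT la P" "P c \<noteq> 0" shows "c \<in> la"
proof (rule ccontr)
  assume "c \<notin> la"
  then have "P c = 0" by (rule syt_zero[OF assms(1)])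
  then show False using assms(2) by simp
qed

lemma syt_range:
  assumes "is_SYT la P" "c \<in> la" shows "1 \<le> P c" "P c \<le> card la"
proof -
  have "P ` la = {1..card la}" using syt_bij[OF assms(1)] by (rule bij_betw_imp_surj_on)
  moreover have "P c \<in> P ` la" by (rule imageI[OF assms(2)])
  ultimately have "P c \<in> {1..card la}" by simp
  then show "1 \<le> P c" "P c \<le> card la" by simp_all
qed

lemma syt_le_n:
  assumes "is_SYT la P" shows "P c \<le> card la"
proof (cases "c \<in> la")
  case True then show ?thesis using syt_range[OF assms] by simp
next
  case False then have "P c = 0" by (rule syt_zero[OF assms])
  then show ?thesis by simp
qed

lemma syt_row:
  assumes "is_SYT la P" "(x' + d, y) \<in> la" "1 \<le> x'"
  shows "P (x', y) \<le> P (x' + d, y)"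
  using assms(2)
proof (induction d)
  case 0 then show ?case by simp
next
  case (Suc d)
  have pl: "is_partition la" by (rule syt_part[OF assms(1)])
  have y1: "1 \<le> y" using part_pos[OF pl Suc.prems] by blast
  have a: "(x' + d, y) \<in> la"
    by (rule part_down[OF pl Suc.prems]) (use assms(3) y1 in simp_all)
  have b: "P (x' + d, y) < P (x' + Suc d, y)"
    using syt_rowlt[OF assms(1) a] Suc.prems by simp
  show ?case using Suc.IH[OF a] b by linarith
qed

lemma syt_col:
  assumes "is_SYT la P" "(x, y' + d) \<in> la" "1 \<le> y'"
  shows "P (x, y') \<le> P (x, y' + d)"
  using assms(2)
proof (induction d)
  case 0 then show ?case by simp
next
  case (Suc d)
  have pl: "is_partition la" by (rule syt_part[OF assms(1)])
  have x1: "1 \<le> x" using part_pos[OF pl Suc.prems] by blast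
  have a: "(x, y' + d) \<in> la"
    by (rule part_down[OF pl Suc.prems]) (use assms(3) x1 in simp_all)
  have b: "P (x, y' + d) < P (x, y' + Suc d)"
    using syt_collt[OF assms(1) a] Suc.prems by simp
  show ?case using Suc.IH[OF a] b by linarith
qed

lemma syt_mono:
  assumes "is_SYT la P" "(x, y) \<in> la" "1 \<le> x'" "x' \<le> x" "1 \<le> y'" "y' \<le> y"
  shows "P (x', y') \<le> P (x, y)"
proof -
  have pl: "is_partition la" by (rule syt_part[OF assms(1)])
  have y1: "1 \<le> y" using assms by simp
  have a: "(x', y) \<in> la" by (rule part_down[OF pl assms(2,3,4) y1 order_refl])
  have "P (x', y') \<le> P (x', y' + (y - y'))"
    by (rule syt_col[OF assms(1) _ assms(5)]) (use a assms in simp)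
  also have "\<dots> = P (x', y)" using assms by simp
  also have "\<dots> \<le> P (x' + (x - x'), y)"
    by (rule syt_row[OF assms(1) _ assms(3)]) (use assms in simp)
  also have "\<dots> = P (x, y)" using assms by simp
  finally show ?thesis .
qed

lemma subshape_sub: assumes "is_SYT la P" shows "subshape P k \<subseteq> la"
proof
  fix c assume "c \<in> subshape P k"
  then have "P c \<noteq> 0" by (simp add: subshape_def)
  then show "c \<in> la" by (rule syt_nz_in[OF assms])
qed

lemma subshape_part:
  assumes "is_SYT la P" shows "is_partition (subshape P k)"
proof -
  have pl: "is_partition la" by (rule syt_part[OF assms(1)])
  have fin: "finite (subshape P k)"
    by (rule finite_subset[OF subshape_sub[OF assms] part_fin[OF pl]])
  have A: "\<forall>x y. (x, y) \<in> subshape P k \<longrightarrow> 1 \<le> x \<and> 1 \<le> y"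
  proof (intro allI impI)
    fix x y assume "(x, y) \<in> subshape P k"
    then have "(x, y) \<in> la" using subshape_sub[OF assms] by blast
    then show "1 \<le> x \<and> 1 \<le> y" by (rule part_pos[OF pl])
  qed
  have B: "\<forall>x y x' y'. (x, y) \<in> subshape P k \<and> 1 \<le> x' \<and> x' \<le> x \<and> 1 \<le> y' \<and> y' \<le> y \<longrightarrow> (x', y') \<in> subshape P k"
  proof (intro allI impI)
    fix x y x' y'
    assume h: "(x, y) \<in> subshape P k \<and> 1 \<le> x' \<and> x' \<le> x \<and> 1 \<le> y' \<and> y' \<le> y"
    then have xy: "(x, y) \<in> la" using subshape_sub[OF assms] by blast
    have xy': "(x', y') \<in> la" using part_down[OF pl xy] h by blast
    have "1 \<le> P (x', y')" by (rule syt_range(1)[OF assms xy'])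
    moreover have "P (x', y') \<le> P (x, y)" using syt_mono[OF assms xy] h by blast
    moreover have "P (x, y) \<le> k" using h unfolding subshape_def by simp
    ultimately show "(x', y') \<in> subshape P k" unfolding subshape_def by simp
  qed
  show ?thesis unfolding is_partition_def using fin A B by (intro conjI)
qed

lemma subshape_card:
  assumes "is_SYT la P" "k \<le> card la" shows "card (subshape P k) = k"
proof -
  have inj: "inj_on P la" using syt_bij[OF assms(1)] by (rule bij_betw_imp_inj_on)
  have im: "P ` la = {1..card la}" using syt_bij[OF assms(1)] by (rule bij_betw_imp_surj_on)
  have eq: "subshape P k = {c \<in> la. P c \<le> k}"
  proof (rule set_eqI)
    fix c
    show "c \<in> subshape P k \<longleftrightarrow> c \<in> {c \<in> la. P c \<le> k}"
    proof
      assume c: "c \<in> subshape P k"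
      then have "P c \<noteq> 0" "P c \<le> k" by (simp_all add: subshape_def)
      moreover have "c \<in> la" using syt_nz_in[OF assms(1) \<open>P c \<noteq> 0\<close>] .
      ultimately show "c \<in> {c \<in> la. P c \<le> k}" by simp
    next
      assume c: "c \<in> {c \<in> la. P c \<le> k}"
      then have "1 \<le> P c" using syt_range(1)[OF assms(1)] by simp
      then show "c \<in> subshape P k" using c unfolding subshape_def by simp
    qed
  qed
  have im2: "P ` {c \<in> la. P c \<le> k} = {1..k}"
  proof
    show "P ` {c \<in> la. P c \<le> k} \<subseteq> {1..k}"
    proof
      fix m assume "m \<in> P ` {c \<in> la. P c \<le> k}"
      then obtain c where c: "c \<in> la" "P c \<le> k" "m = P c" by blast
      then show "m \<in> {1..k}" using syt_range(1)[OF assms(1) c(1)] by simp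
    qed
    show "{1..k} \<subseteq> P ` {c \<in> la. P c \<le> k}"
    proof
      fix m assume m: "m \<in> {1..k}"
      then have "m \<in> P ` la" using im assms(2) by simp
      then obtain c where "c \<in> la" "m = P c" by blast
      then show "m \<in> P ` {c \<in> la. P c \<le> k}" using m by auto
    qed
  qed
  have inj2: "inj_on P {c \<in> la. P c \<le> k}" using inj by (rule inj_on_subset) blast
  have "card {c \<in> la. P c \<le> k} = card (P ` {c \<in> la. P c \<le> k})"
    by (rule card_image[OF inj2, symmetric])
  also have "\<dots> = k" unfolding im2 by simp
  finally show ?thesis using eq by simp
qed

lemma subshape_mem: "c \<in> subshape P k \<longleftrightarrow> P c \<noteq> 0 \<and> P c \<le> k"
  unfolding subshape_def by simp

lemma vals_eq:
  fixes a b n :: nat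
  assumes "\<forall>k\<le>n. (a \<noteq> 0 \<and> a \<le> k) = (b \<noteq> 0 \<and> b \<le> k)" "a \<le> n" "b \<le> n"
  shows "a = b"
proof -
  have "(a \<noteq> 0) = (b \<noteq> 0)" using assms(1)[rule_format, of n] assms by auto
  moreover have "a \<noteq> 0 \<Longrightarrow> b \<le> a" using assms(1)[rule_format, of a] assms by auto
  moreover have "b \<noteq> 0 \<Longrightarrow> a \<le> b" using assms(1)[rule_format, of b] assms by auto
  ultimately show ?thesis by linarith
qed

section \<open>Chains and tableaux\<close>

definition tabE :: "nat \<Rightarrow> (nat \<Rightarrow> diagram) \<Rightarrow> cell \<Rightarrow> nat" where
  "tabE n E c = (if \<exists>i. 1 \<le> i \<and> i \<le> n \<and> c \<in> E i - E (i - 1)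
                  then (LEAST i. 1 \<le> i \<and> i \<le> n \<and> c \<in> E i - E (i - 1)) else 0)"

lemma tabE_le: "tabE n E c \<le> n"
proof (cases "\<exists>i. 1 \<le> i \<and> i \<le> n \<and> c \<in> E i - E (i - 1)")
  case True
  have "1 \<le> (LEAST i. 1 \<le> i \<and> i \<le> n \<and> c \<in> E i - E (i - 1)) \<and>
     (LEAST i. 1 \<le> i \<and> i \<le> n \<and> c \<in> E i - E (i - 1)) \<le> n \<and>
     c \<in> E (LEAST i. 1 \<le> i \<and> i \<le> n \<and> c \<in> E i - E (i - 1)) - E ((LEAST i. 1 \<le> i \<and> i \<le> n \<and> c \<in> E i - E (i - 1)) - 1)"
    by (rule LeastI_ex[OF True])
  then show ?thesis unfolding tabE_def using True by simp
next
  case False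
  then have "tabE n E c = 0" unfolding tabE_def by (simp only: if_False)
  then show ?thesis by simp
qed

lemma tabE_mem:
  assumes mono: "\<And>i j. i \<le> j \<Longrightarrow> j \<le> n \<Longrightarrow> E i \<subseteq> E j" and e0: "E 0 = {}" and k: "k \<le> n"
  shows "c \<in> E k \<longleftrightarrow> tabE n E c \<noteq> 0 \<and> tabE n E c \<le> k"
proof
  assume c: "c \<in> E k"
  define i0 where "i0 = (LEAST i. c \<in> E i)"
  have ci0: "c \<in> E i0" unfolding i0_def by (rule LeastI[of _ k]) (rule c)
  have i0k: "i0 \<le> k" unfolding i0_def by (rule Least_le) (rule c)
  have i01: "1 \<le> i0" using ci0 e0 by (cases i0) auto
  have "c \<notin> E (i0 - 1)"
  proof
    assume "c \<in> E (i0 - 1)"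
    then have "i0 \<le> i0 - 1" unfolding i0_def by (rule Least_le)
    then show False using i01 by simp
  qed
  then have ex: "1 \<le> i0 \<and> i0 \<le> n \<and> c \<in> E i0 - E (i0 - 1)" using ci0 i01 i0k k by simp
  then have ex': "\<exists>i. 1 \<le> i \<and> i \<le> n \<and> c \<in> E i - E (i - 1)" by blast
  have "tabE n E c = (LEAST i. 1 \<le> i \<and> i \<le> n \<and> c \<in> E i - E (i - 1))"
    unfolding tabE_def using ex' by simp
  moreover have "(LEAST i. 1 \<le> i \<and> i \<le> n \<and> c \<in> E i - E (i - 1)) \<le> i0"
    by (rule Least_le) (rule ex)
  moreover have "1 \<le> (LEAST i. 1 \<le> i \<and> i \<le> n \<and> c \<in> E i - E (i - 1))"
    using LeastI_ex[OF ex'] by blast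
  ultimately show "tabE n E c \<noteq> 0 \<and> tabE n E c \<le> k" using i0k by simp
next
  assume h: "tabE n E c \<noteq> 0 \<and> tabE n E c \<le> k"
  then have ex': "\<exists>i. 1 \<le> i \<and> i \<le> n \<and> c \<in> E i - E (i - 1)"
    unfolding tabE_def by (auto split: if_splits)
  then have "tabE n E c = (LEAST i. 1 \<le> i \<and> i \<le> n \<and> c \<in> E i - E (i - 1))"
    unfolding tabE_def by simp
  then have "c \<in> E (tabE n E c)" using LeastI_ex[OF ex'] by simp
  then show "c \<in> E k" using mono[of "tabE n E c" k] h k by blast
qed

section \<open>Growths for the identity\<close>

lemma count_id:
  "card {(i', j'). 1 \<le> i' \<and> i' \<le> i \<and> 1 \<le> j' \<and> j' \<le> j \<and> i' = id j'} = min i j"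
proof -
  have "{(i', j'). 1 \<le> i' \<and> i' \<le> i \<and> 1 \<le> j' \<and> j' \<le> j \<and> i' = id j'} = (\<lambda>k. (k, k)) ` {1..min i j}"
    by auto
  moreover have "inj_on (\<lambda>k::nat. (k, k)) {1..min i j}" by (auto simp: inj_on_def)
  ultimately show ?thesis by (simp add: card_image)
qed

lemma growth_j:
  assumes g: "is_growth n s L" shows "\<forall>i\<le>n. \<forall>j<n. L i j \<subseteq> L i (j + 1)"
  using g unfolding is_growth_def by (elim conjE) assumption

lemma growth_i:
  assumes g: "is_growth n s L" shows "\<forall>i<n. \<forall>j\<le>n. L i j \<subseteq> L (i + 1) j"
  using g unfolding is_growth_def by (elim conjE) assumption

lemma growth_part:
  assumes g: "is_growth n s L" shows "\<forall>i\<le>n. \<forall>j\<le>n. is_partition (L i j)"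
  using g unfolding is_growth_def by (elim conjE) assumption

lemma growth_out:
  assumes g: "is_growth n s L" shows "\<forall>i j. (i > n \<or> j > n) \<longrightarrow> L i j = {}"
  using g unfolding is_growth_def by (elim conjE) assumption

lemma growth_cardc:
  assumes g: "is_growth n s L" shows "\<forall>i\<le>n. \<forall>j\<le>n. card (L i j) =
        card {(i', j'). 1 \<le> i' \<and> i' \<le> i \<and> 1 \<le> j' \<and> j' \<le> j \<and> i' = s j'}"
  using g unfolding is_growth_def by (elim conjE) assumption

lemma growth_monoj:
  assumes g: "is_growth n id L" and i: "i \<le> n" and jj: "j \<le> j'" "j' \<le> n"
  shows "L i j \<subseteq> L i j'"
  using jj
proof (induction j' rule: dec_induct)
  case base then show ?case by simp
next
  case (step m)
  have "L i m \<subseteq> L i (m + 1)" using growth_j[OF g] i step by simp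
  then show ?case using step by auto
qed

lemma growth_monoi:
  assumes g: "is_growth n id L" and j: "j \<le> n" and ii: "i \<le> i'" "i' \<le> n"
  shows "L i j \<subseteq> L i' j"
  using ii
proof (induction i' rule: dec_induct)
  case base then show ?case by simp
next
  case (step m)
  have "L m j \<subseteq> L (m + 1) j" using growth_i[OF g] j step by simp
  then show ?case using step by auto
qed

lemma growth_card:
  assumes g: "is_growth n id L" "i \<le> n" "j \<le> n" shows "card (L i j) = min i j"
  using growth_cardc[OF assms(1)] assms(2,3) count_id by simp

lemma growth_fin:
  assumes g: "is_growth n id L" "i \<le> n" "j \<le> n" shows "finite (L i j)"
  using growth_part[OF assms(1)] assms(2,3) unfolding is_partition_def by simp

lemma growth_diag:
  assumes g: "is_growth n id L" and i: "i \<le> n" and j: "j \<le> n"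
  shows "L i j = L (min i j) (min i j)"
proof (cases "i \<le> j")
  case True
  have "L i i \<subseteq> L i j" using growth_monoj[OF g i, of i j] True j by simp
  moreover have "card (L i i) = card (L i j)" using growth_card[OF g] i j True by simp
  ultimately have "L i i = L i j" by (rule card_subset_eq[OF growth_fin[OF g i j]])
  then show ?thesis using True by (simp add: min_def)
next
  case False
  have "L j j \<subseteq> L i j" using growth_monoi[OF g j, of j i] False i by simp
  moreover have "card (L j j) = card (L i j)" using growth_card[OF g] i j False by simp
  ultimately have "L j j = L i j" by (rule card_subset_eq[OF growth_fin[OF g i j]])
  then show ?thesis using False by (simp add: min_def)
qed

lemma growth_00:
  assumes g: "is_growth n id L" shows "L 0 0 = {}"
  using growth_card[OF g, of 0 0] growth_fin[OF g, of 0 0] by simp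

lemma tabP_eq: "tabP n L = tabE n (\<lambda>i. L i n)"
  unfolding tabP_def tabE_def by (rule ext) simp

lemma tabQ_eq: "tabQ n L = tabE n (\<lambda>i. L n i)"
  unfolding tabQ_def tabE_def by (rule ext) simp

lemma growth_tabP:
  assumes g: "is_growth n id L" and k: "k \<le> n"
  shows "c \<in> L k k \<longleftrightarrow> tabP n L c \<noteq> 0 \<and> tabP n L c \<le> k"
proof -
  have "c \<in> L k n \<longleftrightarrow> tabE n (\<lambda>i. L i n) c \<noteq> 0 \<and> tabE n (\<lambda>i. L i n) c \<le> k"
  proof (rule tabE_mem)
    show "\<And>i j. i \<le> j \<Longrightarrow> j \<le> n \<Longrightarrow> L i n \<subseteq> L j n" using growth_monoi[OF g] by simp
    show "L 0 n = {}" using growth_diag[OF g, of 0 n] growth_00[OF g] by simp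
  qed (rule k)
  moreover have "L k n = L k k" using growth_diag[OF g k, of n] k by simp
  ultimately show ?thesis by (simp add: tabP_eq)
qed

lemma growth_tabQ:
  assumes g: "is_growth n id L" and k: "k \<le> n"
  shows "c \<in> L k k \<longleftrightarrow> tabQ n L c \<noteq> 0 \<and> tabQ n L c \<le> k"
proof -
  have "c \<in> L n k \<longleftrightarrow> tabE n (\<lambda>i. L n i) c \<noteq> 0 \<and> tabE n (\<lambda>i. L n i) c \<le> k"
  proof (rule tabE_mem)
    show "\<And>i j. i \<le> j \<Longrightarrow> j \<le> n \<Longrightarrow> L n i \<subseteq> L n j" using growth_monoj[OF g] by simp
    show "L n 0 = {}" using growth_diag[OF g, of n 0] growth_00[OF g] by simp
  qed (rule k)
  moreover have "L n k = L k k" using growth_diag[OF g _ k, of n] k by simp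
  ultimately show ?thesis by (simp add: tabQ_eq)
qed


section \<open>The canonical growth\<close>

definition L0 :: "(cell \<Rightarrow> nat) \<Rightarrow> nat \<Rightarrow> nat \<Rightarrow> nat \<Rightarrow> diagram" where
  "L0 P n i j = (if i \<le> n \<and> j \<le> n then subshape P (min i j) else {})"

lemma subshape_mono: "k \<le> k' \<Longrightarrow> subshape P k \<subseteq> subshape P k'"
  unfolding subshape_def by auto

lemma L0_in: "i \<le> n \<Longrightarrow> j \<le> n \<Longrightarrow> L0 P n i j = subshape P (min i j)"
  unfolding L0_def by simp

lemma L0_growth:
  assumes P: "is_SYT la P" and n: "card la = n"
  shows "is_growth n id (L0 P n)"
  unfolding is_growth_def
proof (intro conjI allI impI)
  fix i j :: nat assume "n < i \<or> n < j" then show "L0 P n i j = {}" unfolding L0_def by auto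
next
  fix i j :: nat assume ij: "i \<le> n" "j \<le> n"
  show "is_partition (L0 P n i j)" unfolding L0_in[OF ij] by (rule subshape_part[OF P])
  have "min i j \<le> card la" using ij n by simp
  then show "card (L0 P n i j) = card {(i', j'). 1 \<le> i' \<and> i' \<le> i \<and> 1 \<le> j' \<and> j' \<le> j \<and> i' = id j'}"
    unfolding count_id L0_in[OF ij] by (rule subshape_card[OF P])
next
  fix i j :: nat assume ij: "i \<le> n" "j < n"
  then have ij': "j + 1 \<le> n" "j \<le> n" by simp_all
  show "L0 P n i j \<subseteq> L0 P n i (j + 1)"
    unfolding L0_in[OF ij(1) ij'(2)] L0_in[OF ij(1) ij'(1)] by (rule subshape_mono) simp
next
  fix i j :: nat assume ij: "i < n" "j \<le> n"
  then have ij': "i + 1 \<le> n" "i \<le> n" by simp_all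
  show "L0 P n i j \<subseteq> L0 P n (i + 1) j"
    unfolding L0_in[OF ij'(2) ij(2)] L0_in[OF ij'(1) ij(2)] by (rule subshape_mono) simp
qed

lemma L0_tabP:
  assumes P: "is_SYT la P" and n: "card la = n"
  shows "tabP n (L0 P n) = P"
proof
  fix c
  have g: "is_growth n id (L0 P n)" by (rule L0_growth[OF P n])
  show "tabP n (L0 P n) c = P c"
  proof (rule vals_eq[where n = n])
    show "\<forall>k\<le>n. (tabP n (L0 P n) c \<noteq> 0 \<and> tabP n (L0 P n) c \<le> k) = (P c \<noteq> 0 \<and> P c \<le> k)"
    proof (intro allI impI)
      fix k assume k: "k \<le> n"
      have e: "L0 P n k k = subshape P k" using L0_in[OF k k] by simp
      have "(c \<in> subshape P k) = (tabP n (L0 P n) c \<noteq> 0 \<and> tabP n (L0 P n) c \<le> k)"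
        using growth_tabP[OF g k, of c] unfolding e .
      then show "(tabP n (L0 P n) c \<noteq> 0 \<and> tabP n (L0 P n) c \<le> k) = (P c \<noteq> 0 \<and> P c \<le> k)"
        unfolding subshape_mem by (rule sym)
    qed
    show "tabP n (L0 P n) c \<le> n" unfolding tabP_eq by (rule tabE_le)
    show "P c \<le> n" using syt_le_n[OF P, of c] n by simp
  qed
qed

lemma L0_tabQ:
  assumes P: "is_SYT la P" and n: "card la = n"
  shows "tabQ n (L0 P n) = P"
proof
  fix c
  have g: "is_growth n id (L0 P n)" by (rule L0_growth[OF P n])
  show "tabQ n (L0 P n) c = P c"
  proof (rule vals_eq[where n = n])
    show "\<forall>k\<le>n. (tabQ n (L0 P n) c \<noteq> 0 \<and> tabQ n (L0 P n) c \<le> k) = (P c \<noteq> 0 \<and> P c \<le> k)"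
    proof (intro allI impI)
      fix k assume k: "k \<le> n"
      have e: "L0 P n k k = subshape P k" using L0_in[OF k k] by simp
      have "(c \<in> subshape P k) = (tabQ n (L0 P n) c \<noteq> 0 \<and> tabQ n (L0 P n) c \<le> k)"
        using growth_tabQ[OF g k, of c] unfolding e .
      then show "(tabQ n (L0 P n) c \<noteq> 0 \<and> tabQ n (L0 P n) c \<le> k) = (P c \<noteq> 0 \<and> P c \<le> k)"
        unfolding subshape_mem by (rule sym)
    qed
    show "tabQ n (L0 P n) c \<le> n" unfolding tabQ_eq by (rule tabE_le)
    show "P c \<le> n" using syt_le_n[OF P, of c] n by simp
  qed
qed

lemma growth_unique:
  assumes P: "is_SYT la P" and Q: "is_SYT la Q" and n: "card la = n"
    and g: "is_growth n id L" and tP: "tabP n L = P" and tQ: "tabQ n L = Q"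
  shows "P = Q \<and> L = L0 P n"
proof -
  have dP: "L k k = subshape P k" if k: "k \<le> n" for k
  proof (rule set_eqI)
    fix c show "c \<in> L k k \<longleftrightarrow> c \<in> subshape P k"
      using growth_tabP[OF g k, of c] unfolding tP subshape_mem .
  qed
  have dQ: "L k k = subshape Q k" if k: "k \<le> n" for k
  proof (rule set_eqI)
    fix c show "c \<in> L k k \<longleftrightarrow> c \<in> subshape Q k"
      using growth_tabQ[OF g k, of c] unfolding tQ subshape_mem .
  qed
  have PQ: "P = Q"
  proof
    fix c
    show "P c = Q c"
    proof (rule vals_eq[where n = n])
      show "\<forall>k\<le>n. (P c \<noteq> 0 \<and> P c \<le> k) = (Q c \<noteq> 0 \<and> Q c \<le> k)"
      proof (intro allI impI)
        fix k assume k: "k \<le> n"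
        have "(c \<in> subshape P k) = (c \<in> subshape Q k)" using dP[OF k] dQ[OF k] by simp
        then show "(P c \<noteq> 0 \<and> P c \<le> k) = (Q c \<noteq> 0 \<and> Q c \<le> k)" unfolding subshape_mem .
      qed
      show "P c \<le> n" using syt_le_n[OF P, of c] n by simp
      show "Q c \<le> n" using syt_le_n[OF Q, of c] n by simp
    qed
  qed
  have "L = L0 P n"
  proof (intro ext)
    fix i j
    show "L i j = L0 P n i j"
    proof (cases "i \<le> n \<and> j \<le> n")
      case True
      then have i: "i \<le> n" and j: "j \<le> n" by simp_all
      have m: "min i j \<le> n" using i by (meson min.coboundedI1)
      have "L i j = L (min i j) (min i j)" by (rule growth_diag[OF g i j])
      also have "\<dots> = subshape P (min i j)" by (rule dP[OF m])
      also have "\<dots> = L0 P n i j" by (rule L0_in[OF i j, symmetric])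
      finally show ?thesis .
    next
      case False
      then have "n < i \<or> n < j" by auto
      then have "L i j = {}" using growth_out[OF g] by blast
      moreover have "L0 P n i j = {}" unfolding L0_def by (rule if_not_P[OF False])
      ultimately show ?thesis by simp
    qed
  qed
  with PQ show ?thesis by simp
qed

lemma sq_off:
  assumes P: "is_SYT la P" and n: "card la = n"
    and ij: "i \<noteq> j" "1 \<le> i" "i \<le> n" "1 \<le> j" "j \<le> n"
  shows "square_prob q t (L0 P n) i j = 1"
proof -
  have "card (subshape P (min (i - 1) j)) = min (i - 1) j"
    using subshape_card[OF P] n ij by simp
  moreover have "card (subshape P (min i (j - 1))) = min i (j - 1)"
    using subshape_card[OF P] n ij by simp
  moreover have "min (i - 1) j \<noteq> min i (j - 1)" using ij by auto
  ultimately have "subshape P (min (i - 1) j) \<noteq> subshape P (min i (j - 1))" by metis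
  moreover have i1: "i - 1 \<le> n" "j - 1 \<le> n" using ij by linarith+
  moreover have "L0 P n (i - 1) j = subshape P (min (i - 1) j)" using ij i1 unfolding L0_def by simp
  moreover have "L0 P n i (j - 1) = subshape P (min i (j - 1))" using ij i1 unfolding L0_def by simp
  ultimately have "L0 P n (i - 1) j \<noteq> L0 P n i (j - 1)" by simp
  then show ?thesis unfolding square_prob_def Let_def by simp
qed

lemma sq_diag:
  assumes P: "is_SYT la P" and n: "card la = n"
    and i: "1 \<le> i" "i \<le> n"
  shows "square_prob q t (L0 P n) i i =
    t powi (nskew (subshape P i) (subshape P (i - 1))) * alpha q t (subshape P i) (subshape P (i - 1))"
proof -
  have sub: "subshape P (i - 1) \<subseteq> subshape P i" by (auto simp: subshape_def)
  have fin: "finite (subshape P i)" using subshape_part[OF P] unfolding is_partition_def by blast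
  have "card (subshape P i - subshape P (i - 1)) = 1"
    using card_Diff_subset[OF finite_subset[OF sub fin] sub] subshape_card[OF P] n i by simp
  then have up: "subshape P i \<in> Up (subshape P (i - 1))"
    unfolding Up_def using subshape_part[OF P] sub by blast
  have ds: "subshape P (i - 1) \<in> Down_star (subshape P (i - 1))" by (simp add: Down_star_def)
  have e1: "L0 P n (i - 1) (i - 1) = subshape P (i - 1)" "L0 P n (i - 1) i = subshape P (i - 1)"
    "L0 P n i (i - 1) = subshape P (i - 1)" "L0 P n i i = subshape P i"
    using i by (auto simp: L0_def)
  have "square_prob q t (L0 P n) i i = local_prob q t (subshape P (i - 1)) (subshape P (i - 1)) (subshape P i)"
    unfolding square_prob_def Let_def e1 using up ds by simp
  then show ?thesis by (simp only: local_prob_def simp_thms if_True)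
qed

lemma telescope:
  fixes t :: "'a::field" and m :: nat and g :: "nat \<Rightarrow> nat"
  assumes t: "t \<noteq> 0"
  shows "(\<Prod>i\<in>{1..m}. t powi (int (g i) - int (g (i - 1)))) = t powi (int (g m) - int (g 0))"
proof (induction m)
  case 0 then show ?case by simp
next
  case (Suc m)
  have e: "{1..Suc m} = insert (Suc m) {1..m}" by auto
  have "(\<Prod>i\<in>{1..Suc m}. t powi (int (g i) - int (g (i - 1)))) =
        t powi (int (g (Suc m)) - int (g m)) * (\<Prod>i\<in>{1..m}. t powi (int (g i) - int (g (i - 1))))"
    unfolding e by (subst prod.insert) auto
  also have "\<dots> = t powi (int (g (Suc m)) - int (g m)) * t powi (int (g m) - int (g 0))"
    by (simp only: Suc.IH)
  also have "\<dots> = t powi ((int (g (Suc m)) - int (g m)) + (int (g m) - int (g 0)))"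
    by (rule power_int_add[symmetric]) (simp add: t)
  also have "(int (g (Suc m)) - int (g m)) + (int (g m) - int (g 0)) = int (g (Suc m)) - int (g 0)"
    by simp
  finally show ?case .
qed

lemma L0_prob:
  fixes q t :: "'a::field"
  assumes P: "is_SYT la P" and n: "card la = n" and t: "t \<noteq> 0"
  shows "growth_prob q t n (L0 P n) =
     t ^ nfun la * (\<Prod>i\<in>{1..n}. alpha q t (subshape P i) (subshape P (i - 1)))"
proof -
  define f where "f i = t powi (nskew (subshape P i) (subshape P (i - 1))) *
      alpha q t (subshape P i) (subshape P (i - 1))" for i
  have inner: "(\<Prod>j\<in>{1..n}. square_prob q t (L0 P n) i j) = f i" if i: "i \<in> {1..n}" for i
  proof -
    have "(\<Prod>j\<in>{1..n}. square_prob q t (L0 P n) i j) = (\<Prod>j\<in>{1..n}. if j = i then f i else 1)"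
    proof (rule prod.cong[OF refl])
      fix j assume j: "j \<in> {1..n}"
      show "square_prob q t (L0 P n) i j = (if j = i then f i else 1)"
      proof (cases "j = i")
        case True
        then show ?thesis using sq_diag[OF P n, of i q t] i unfolding f_def by simp
      next
        case False
        then show ?thesis using sq_off[OF P n, of i j q t] i j by simp
      qed
    qed
    also have "\<dots> = f i" using i by (simp add: prod.delta')
    finally show ?thesis .
  qed
  have s1: "growth_prob q t n (L0 P n) = (\<Prod>i\<in>{1..n}. f i)"
    unfolding growth_prob_def using inner by (rule prod.cong[OF refl])
  have s2: "(\<Prod>i\<in>{1..n}. f i) = (\<Prod>i\<in>{1..n}. t powi (int (nfun (subshape P i)) - int (nfun (subshape P (i - 1))))) *
      (\<Prod>i\<in>{1..n}. alpha q t (subshape P i) (subshape P (i - 1)))"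
    unfolding f_def nskew_def by (rule prod.distrib)
  have s3: "(\<Prod>i\<in>{1..n}. t powi (int (nfun (subshape P i)) - int (nfun (subshape P (i - 1))))) =
      t powi (int (nfun (subshape P n)) - int (nfun (subshape P 0)))"
    by (rule telescope[OF t])
  have s4: "subshape P 0 = {}" by (auto simp: subshape_def)
  have s5: "subshape P n = la"
  proof -
    have "finite la" using P unfolding is_SYT_def is_partition_def by blast
    moreover have "card (subshape P n) = card la" using subshape_card[OF P] n by simp
    ultimately show ?thesis using subshape_sub[OF P] by (metis card_subset_eq)
  qed
  have s6: "nfun {} = 0" by (simp add: nfun_def)
  have s7: "t powi (int (nfun (subshape P n)) - int (nfun (subshape P 0))) = t ^ nfun la"
    unfolding s4 s5 s6 by (simp add: power_int_of_nat)
  show ?thesis using s1 s2 s3 s7 by simp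
qed

theorem lemma4p29:
  fixes q t :: "'a::field" and n :: nat and la :: diagram and P Q :: "cell \<Rightarrow> nat"
  assumes "generic_qt q t"
    and "n \<ge> 1"
    and "is_partition la" and "card la = n"
    and "is_SYT la P" and "is_SYT la Q"
  shows "perm_prob q t n id P Q =
           (if P = Q then t ^ nfun la * (\<Prod>i\<in>{1..card la}. alpha q t (subshape P i) (subshape P (i - 1)))
            else 0)"
proof -
  have t: "t \<noteq> 0" using assms(1) unfolding generic_qt_def by blast
  let ?S = "{L. is_growth n id L \<and> tabP n L = P \<and> tabQ n L = Q}"
  show ?thesis
  proof (cases "P = Q")
    case True
    have "?S = {L0 P n}"
    proof (rule set_eqI)
      fix L
      show "L \<in> ?S \<longleftrightarrow> L \<in> {L0 P n}"
      proof
        assume "L \<in> ?S"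
        then have g: "is_growth n id L" and tP: "tabP n L = P" and tQ: "tabQ n L = Q" by auto
        show "L \<in> {L0 P n}" using growth_unique[OF assms(5,6,4) g tP tQ] by simp
      next
        assume "L \<in> {L0 P n}"
        then have L: "L = L0 P n" by simp
        have "is_growth n id (L0 P n)" by (rule L0_growth[OF assms(5,4)])
        moreover have "tabP n (L0 P n) = P" by (rule L0_tabP[OF assms(5,4)])
        moreover have "tabQ n (L0 P n) = Q" using L0_tabQ[OF assms(5,4)] True by simp
        ultimately show "L \<in> ?S" using L by simp
      qed
    qed
    then show ?thesis unfolding perm_prob_def using True L0_prob[OF assms(5,4) t] assms(4) by simp
  next
    case False
    have S0: "?S = {}"
    proof (rule equals0I)
      fix L assume "L \<in> ?S"
      then have g: "is_growth n id L" and tP: "tabP n L = P" and tQ: "tabQ n L = Q" by auto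
      show False using growth_unique[OF assms(5,6,4) g tP tQ] False by simp
    qed
    show ?thesis unfolding perm_prob_def S0 using False by simp
  qed
qed

end
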